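(* Let $\omega$ be a primitive substitution rule in $\mathbb{R}^d$ with finite local complexity whose expansion map is $Q=\lambda I$, where the expansion factor $\lambda$ is an irrational Pisot number. Let $\mathcal{T}$ be a tiling with $\omega(\mathcal{T})=\mathcal{T}$ (a fixed point of $\omega$), and assume $\mathcal{T}$ is repetitive. Then for every nonempty finite $\mathcal{T}$-legal patch $\mathcal{P}$ and every $v\in\mathbb{R}^d\setminus\{0\}$ there is $n_0\in\mathbb{N}$ such that the patch $\bigcup_{n=0}^{n_0}(\mathcal{P}+nv)$ is not $\mathcal{T}$-legal.
   Context: A tile in $\mathbb{R}^d$ is a compact set equal to the closure of its interior, possibly carrying a label from a fixed finite set; $T+x$ denotes the translate (same label). A patch is a set of tiles any two distinct members of which have disjoint interiors; its support is the closure of the union of the supports of its tiles; $\mathcal{P}+x=\{T+x: T\in\mathcal{P}\}$. A tiling is a patch whose support is $\mathbb{R}^d$. A patch $\mathcal{P}$ is $\mathcal{T}$-legal if $\mathcal{P}+x\subset\mathcal{T}$ for some $x\in\mathbb{R}^d$. $\mathcal{T}$ is repetitive if for every finite $\mathcal{T}$-legal patch $\mathcal{P}$ there is $R>0$ such that every ball of radius $R$ contains the support of some translate $\mathcal{P}+x\subset\mathcal{T}$. For a patch $\mathcal{P}$ and $S\subset\mathbb{R}^d$, $\mathcal{P}\sqcap S=\{T\in\mathcal{P}:\operatorname{supp}T\cap S\neq\emptyset\}$. A substitution rule consists of a finite set $\mathcal{A}$ of tiles (prototiles), a linear map $Q$ of $\mathbb{R}^d$ all of whose eigenvalues have modulus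 $>1$, and a map $\omega$ assigning to each $P\in\mathcal{A}$ a finite patch $\omega(P)$ of translates of elements of $\mathcal{A}$ with $\operatorname{supp}\omega(P)=Q(\operatorname{supp}P)$; it is extended by $\omega(P+x)=\omega(P)+Qx$ and to patches of translates of prototiles by taking unions. With $\mathcal{A}=\{T_1,\dots,T_m\}$, the substitution matrix has $(i,j)$ entry the number of translates of $T_i$ in $\omega(T_j)$; $\omega$ is primitive if some power of this matrix has all entries positive. $\omega$ has finite local complexity if for each compact $K$ the set $\{\omega^n(P)\sqcap(K+x): n>0, P\in\mathcal{A}, x\in\mathbb{R}^d\}$ is finite up to translation. A Pisot number is a real algebraic integer $>1$ all of whose other algebraic conjugates have modulus $<1$. *)

theory Defs
  imports "HOL-Analysis.Analysis" "HOL-Computational_Algebra.Polynomial"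
begin

type_synonym ('a, 'l) tile = "'a set \<times> 'l"

definition is_tile :: "('a::euclidean_space, 'l) tile \<Rightarrow> bool" where
  "is_tile T \<longleftrightarrow> compact (fst T) \<and> fst T = closure (interior (fst T))"

definition ttrans :: "('a::euclidean_space, 'l) tile \<Rightarrow> 'a \<Rightarrow> ('a, 'l) tile" where
  "ttrans T x = ((\<lambda>y. y + x) ` fst T, snd T)"

definition ptrans :: "('a::euclidean_space, 'l) tile set \<Rightarrow> 'a \<Rightarrow> ('a, 'l) tile set" where
  "ptrans P x = (\<lambda>T. ttrans T x) ` P"

definition is_patch :: "('a::euclidean_space, 'l) tile set \<Rightarrow> bool" where
  "is_patch P \<longleftrightarrow> (\<forall>T\<in>P. is_tile T) \<and>
     (\<forall>T\<in>P. \<forall>T'\<in>P. T \<noteq> T' \<longrightarrow> interior (fst T) \<inter> interior (fst T') = {})"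

definition supp :: "('a::euclidean_space, 'l) tile set \<Rightarrow> 'a set" where
  "supp P = closure (\<Union>T\<in>P. fst T)"

definition is_tiling :: "('a::euclidean_space, 'l) tile set \<Rightarrow> bool" where
  "is_tiling P \<longleftrightarrow> is_patch P \<and> supp P = UNIV"

definition legal :: "('a::euclidean_space, 'l) tile set \<Rightarrow> ('a, 'l) tile set \<Rightarrow> bool" where
  "legal \<T> P \<longleftrightarrow> (\<exists>x. ptrans P x \<subseteq> \<T>)"

definition repetitive :: "('a::euclidean_space, 'l) tile set \<Rightarrow> bool" where
  "repetitive \<T> \<longleftrightarrow> (\<forall>P. finite P \<and> legal \<T> P \<longrightarrow>
     (\<exists>R>0. \<forall>c. \<exists>x. ptrans P x \<subseteq> \<T> \<and> supp (ptrans P x) \<subseteq> ball c R))"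

definition patch_restr :: "('a::euclidean_space, 'l) tile set \<Rightarrow> 'a set \<Rightarrow> ('a, 'l) tile set" where
  "patch_restr P S = {T\<in>P. fst T \<inter> S \<noteq> {}}"

text \<open>Substitution with expansion map \<open>Q = \<lambda> I\<close>: prototile set \<open>A\<close>, scalar \<open>lam\<close>,
  and \<open>\<omega>\<close> giving the image patch of each prototile.\<close>

definition translates_of :: "('a::euclidean_space, 'l) tile set \<Rightarrow> ('a, 'l) tile set" where
  "translates_of A = {ttrans P x | P x. P \<in> A}"

text \<open>Extension to translates of prototiles: \<open>\<omega>(P + x) = \<omega>(P) + Q x\<close>.\<close>
definition subst_tile ::
  "('a::euclidean_space, 'l) tile set \<Rightarrow> real \<Rightarrow> (('a, 'l) tile \<Rightarrow> ('a, 'l) tile set)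
     \<Rightarrow> ('a, 'l) tile \<Rightarrow> ('a, 'l) tile set" where
  "subst_tile A lam \<omega> S = \<Union>{ptrans (\<omega> P) (lam *\<^sub>R x) | P x. P \<in> A \<and> S = ttrans P x}"

definition subst_patch ::
  "('a::euclidean_space, 'l) tile set \<Rightarrow> real \<Rightarrow> (('a, 'l) tile \<Rightarrow> ('a, 'l) tile set)
     \<Rightarrow> ('a, 'l) tile set \<Rightarrow> ('a, 'l) tile set" where
  "subst_patch A lam \<omega> \<P> = (\<Union>S\<in>\<P>. subst_tile A lam \<omega> S)"

definition subst_rule ::
  "('a::euclidean_space, 'l) tile set \<Rightarrow> real \<Rightarrow> (('a, 'l) tile \<Rightarrow> ('a, 'l) tile set) \<Rightarrow> bool" where
  "subst_rule A lam \<omega> \<longleftrightarrow>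
     finite A \<and> (\<forall>P\<in>A. is_tile P) \<and> \<bar>lam\<bar> > 1 \<and>
     (\<forall>P\<in>A. finite (\<omega> P) \<and> is_patch (\<omega> P) \<and> \<omega> P \<subseteq> translates_of A \<and>
              supp (\<omega> P) = (\<lambda>y. lam *\<^sub>R y) ` fst P) \<and>
     \<comment> \<open>well-definedness of the extension \<open>\<omega>(P + x) = \<omega>(P) + Q x\<close>\<close>
     (\<forall>P\<in>A. \<forall>P'\<in>A. \<forall>x y. ttrans P x = ttrans P' y \<longrightarrow>
              ptrans (\<omega> P) (lam *\<^sub>R x) = ptrans (\<omega> P') (lam *\<^sub>R y))"

definition subst_matrix ::
  "(('a::euclidean_space, 'l) tile \<Rightarrow> ('a, 'l) tile set) \<Rightarrow> ('a, 'l) tile \<Rightarrow> ('a, 'l) tile \<Rightarrow> nat" where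
  "subst_matrix \<omega> Ti Tj = card {x. ttrans Ti x \<in> \<omega> Tj}"

fun mat_pow ::
  "('b set) \<Rightarrow> ('b \<Rightarrow> 'b \<Rightarrow> nat) \<Rightarrow> nat \<Rightarrow> 'b \<Rightarrow> 'b \<Rightarrow> nat" where
  "mat_pow I M 0 = (\<lambda>i j. if i = j then 1 else 0)"
| "mat_pow I M (Suc n) = (\<lambda>i j. \<Sum>k\<in>I. M i k * mat_pow I M n k j)"

definition primitive ::
  "('a::euclidean_space, 'l) tile set \<Rightarrow> (('a, 'l) tile \<Rightarrow> ('a, 'l) tile set) \<Rightarrow> bool" where
  "primitive A \<omega> \<longleftrightarrow>
     (\<exists>n\<ge>1. \<forall>Ti\<in>A. \<forall>Tj\<in>A. mat_pow A (subst_matrix \<omega>) n Ti Tj > 0)"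

definition finite_up_to_translation :: "('a::euclidean_space, 'l) tile set set \<Rightarrow> bool" where
  "finite_up_to_translation S \<longleftrightarrow>
     (\<exists>F. finite F \<and> (\<forall>\<P>\<in>S. \<exists>\<P>'\<in>F. \<exists>y. \<P> = ptrans \<P>' y))"

definition FLC ::
  "('a::euclidean_space, 'l) tile set \<Rightarrow> real \<Rightarrow> (('a, 'l) tile \<Rightarrow> ('a, 'l) tile set) \<Rightarrow> bool" where
  "FLC A lam \<omega> \<longleftrightarrow> (\<forall>K. compact K \<longrightarrow> finite_up_to_translation
     {patch_restr ((subst_patch A lam \<omega> ^^ n) {P}) ((\<lambda>y. y + x) ` K) | n P x.
        n > 0 \<and> P \<in> A})"

definition pisot :: "real \<Rightarrow> bool" where
  "pisot lam \<longleftrightarrow> lam > 1 \<and>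
     (\<exists>p :: int poly. lead_coeff p = 1 \<and> irreducible p \<and>
        poly (map_poly real_of_int p) lam = 0 \<and>
        (\<forall>z::complex. poly (map_poly complex_of_int p) z = 0 \<and> z \<noteq> complex_of_real lam
            \<longrightarrow> cmod z < 1))"

end

theory Submission
  imports Defs "HOL-Computational_Algebra.Fundamental_Theorem_Algebra" "HOL-Computational_Algebra.Polynomial_Factorial"
begin


lemma map_poly_of_int_mult:
  "map_poly (of_int :: int \<Rightarrow> 'b::comm_ring_1) (f * g) = map_poly of_int f * map_poly of_int g"
  by (intro poly_eqI) (simp add: coeff_map_poly coeff_mult)

lemma map_poly_of_int_add:
  "map_poly (of_int :: int \<Rightarrow> 'b::comm_ring_1) (f + g) = map_poly of_int f + map_poly of_int g"
  by (intro poly_eqI) (simp add: coeff_map_poly)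

lemma map_poly_of_int_diff:
  "map_poly (of_int :: int \<Rightarrow> 'b::comm_ring_1) (f - g) = map_poly of_int f - map_poly of_int g"
  by (intro poly_eqI) (simp add: coeff_map_poly)

lemma map_poly_of_int_smult:
  "map_poly (of_int :: int \<Rightarrow> 'b::comm_ring_1) (smult a f) = smult (of_int a) (map_poly of_int f)"
  by (intro poly_eqI) (simp add: coeff_map_poly)

lemma poly_of_int_real_complex:
  "poly (map_poly complex_of_int f) (complex_of_real x) = complex_of_real (poly (map_poly real_of_int f) x)"
  by (simp add: poly_altdef degree_map_poly coeff_map_poly)



lemma minpoly_deg:
  fixes p b :: "int poly" and lam :: real
  assumes irr: "irreducible p" and pr: "poly (map_poly of_int p) lam = 0"
    and bnz: "b \<noteq> 0" and br: "poly (map_poly of_int b) lam = 0"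
  shows "degree p \<le> degree b"
proof -
  define Pr where "Pr = (\<lambda>d. \<exists>b::int poly. b \<noteq> 0 \<and> poly (map_poly of_int b) lam = 0 \<and> degree b = d)"
  have "Pr (degree b)" using bnz br unfolding Pr_def by blast
  then have ex: "Pr (LEAST d. Pr d)" by (rule LeastI)
  then obtain b0 :: "int poly" where b0: "b0 \<noteq> 0" "poly (map_poly of_int b0) lam = 0"
     "degree b0 = (LEAST d. Pr d)" unfolding Pr_def by blast
  have minb0: "degree b0 \<le> degree c" if "c \<noteq> 0" "poly (map_poly of_int c) lam = 0" for c :: "int poly"
  proof -
    have "Pr (degree c)" using that unfolding Pr_def by blast
    then show ?thesis using b0(3) by (simp add: Least_le)
  qed
  have pnz: "p \<noteq> 0" using irr by auto
  define r where "r = pseudo_mod p b0"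
  obtain a q where aq: "a \<noteq> 0" "smult a p = b0 * q + r"
    using pseudo_mod(1)[OF b0(1), of p] unfolding r_def by blast
  have rdeg: "r = 0 \<or> degree r < degree b0"
    using pseudo_mod(2)[OF b0(1), of p] unfolding r_def by blast
  have "r = smult a p - b0 * q" using aq by simp
  then have "poly (map_poly (of_int :: int \<Rightarrow> real) r) lam = 0"
    using pr b0(2) by (simp only: map_poly_of_int_mult map_poly_of_int_smult
        map_poly_of_int_diff poly_diff poly_mult poly_smult mult_zero_left mult_zero_right diff_zero)
  then have "r = 0" using rdeg minb0 by fastforce
  with aq have eq: "smult a p = b0 * q" by simp
  have prime: "prime_elem p" using irr by (simp add: prime_elem_iff_irreducible)
  have "p dvd b0 * q" unfolding eq[symmetric] by (simp add: dvd_smult)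
  then have "p dvd b0 \<or> p dvd q" using prime prime_elem_dvd_mult_iff by blast
  then show ?thesis
  proof
    assume "p dvd b0"
    then have "degree p \<le> degree b0" using b0(1) by (rule dvd_imp_degree_le)
    also have "\<dots> \<le> degree b" using minb0 bnz br by blast
    finally show ?thesis .
  next
    assume "p dvd q"
    then obtain s where s: "q = p * s" by (auto elim: dvdE)
    have "p * [:a:] = p * (b0 * s)" using eq s by (simp add: algebra_simps)
    then have "[:a:] = b0 * s" using pnz mult_left_cancel by blast
    then have "degree b0 = 0" using aq(1)
      by (metis add_is_0 degree_mult_eq degree_pCons_0 mult_zero_right pCons_eq_0_iff)
    then obtain c where "b0 = [:c:]" by (metis degree_eq_zeroE)
    moreover have "map_poly real_of_int [:c:] = [:of_int c:]" by (simp add: map_poly_pCons)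
    ultimately show ?thesis using b0 by simp
  qed
qed



lemma conj_root:
  assumes "pisot lam" "lam \<notin> \<rat>"
  shows "\<exists>p z. lead_coeff p = 1 \<and> irreducible p \<and> poly (map_poly real_of_int p) lam = 0
     \<and> degree p \<ge> 2 \<and> poly (map_poly complex_of_int p) z = 0 \<and> cmod z < 1"
proof -
  obtain p :: "int poly" where lc: "lead_coeff p = 1" and irr: "irreducible p"
    and pr: "poly (map_poly real_of_int p) lam = 0"
    and conj: "\<And>z. poly (map_poly complex_of_int p) z = 0 \<and> z \<noteq> complex_of_real lam \<Longrightarrow> cmod z < 1"
    using assms(1) unfolding pisot_def by blast
  have pnz: "p \<noteq> 0" using lc by auto
  have deg2: "degree p \<ge> 2"
  proof (rule ccontr)
    assume "\<not> 2 \<le> degree p"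
    then have "degree p = 0 \<or> degree p = 1" by auto
    then show False
    proof
      assume d: "degree p = 0"
      then have "poly (map_poly real_of_int p) lam = 1"
        using lc by (simp add: poly_altdef degree_map_poly coeff_map_poly)
      then show False using pr by simp
    next
      assume d: "degree p = 1"
      then have "poly (map_poly real_of_int p) lam = of_int (coeff p 0) + lam"
        using lc by (simp add: poly_altdef degree_map_poly coeff_map_poly)
      then have "lam = - of_int (coeff p 0)" using pr by simp
      then show False using assms(2) by simp
    qed
  qed
  define Pc where "Pc = map_poly complex_of_int p"
  have Pcl: "poly Pc (complex_of_real lam) = 0"
    unfolding Pc_def poly_of_int_real_complex pr by simp
  have dPc: "degree Pc = degree p" unfolding Pc_def by (simp add: degree_map_poly)
  obtain q where q: "Pc = [:- complex_of_real lam, 1:] * q"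
    using Pcl poly_eq_0_iff_dvd by (metis dvdE)
  have qnz: "q \<noteq> 0" using q pnz dPc deg2 by auto
  have "degree Pc = degree [:- complex_of_real lam, 1:] + degree q"
    unfolding q by (rule degree_mult_eq) (use qnz in auto)
  then have dq: "degree q = degree p - 1"
    using dPc by simp
  then have "\<not> constant (poly q)" using deg2 by (simp add: constant_degree)
  then obtain z where zq: "poly q z = 0" using fundamental_theorem_of_algebra by blast
  have zP: "poly Pc z = 0" using q zq by simp
  have "z \<noteq> complex_of_real lam"
  proof
    assume zl: "z = complex_of_real lam"
    then obtain r where r: "q = [:- complex_of_real lam, 1:] * r"
      using zq poly_eq_0_iff_dvd by (metis dvdE)
    have "poly (pderiv Pc) (complex_of_real lam) = 0"
    proof -
      have a0: "poly [:- complex_of_real lam, 1:] (complex_of_real lam) = 0" by simp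
      show ?thesis unfolding q r
        by (simp only: pderiv_mult poly_add poly_mult a0 mult_zero_left mult_zero_right add_0)
    qed
    moreover have "pderiv Pc = map_poly complex_of_int (pderiv p)"
      unfolding Pc_def by (intro poly_eqI) (simp add: coeff_pderiv coeff_map_poly)
    ultimately have "poly (map_poly real_of_int (pderiv p)) lam = 0"
      by (simp add: poly_of_int_real_complex)
    moreover have "pderiv p \<noteq> 0" using deg2 by (simp add: pderiv_eq_0_iff)
    ultimately have "degree p \<le> degree (pderiv p)"
      using minpoly_deg[OF irr pr] by blast
    then show False using deg2 by (simp add: degree_pderiv)
  qed
  then have "cmod z < 1" using conj zP unfolding Pc_def by blast
  then show ?thesis using lc irr pr deg2 zP unfolding Pc_def by blast
qed



lemma rat_indep:
  fixes p :: "int poly" and lam :: real and c :: "nat \<Rightarrow> rat"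
  assumes irr: "irreducible p" and pr: "poly (map_poly of_int p) lam = 0"
    and s0: "(\<Sum>j<degree p. of_rat (c j) * lam ^ j) = 0"
  shows "\<forall>j<degree p. c j = 0"
proof (rule ccontr)
  define n where "n = degree p"
  assume "\<not> (\<forall>j<degree p. c j = 0)"
  then obtain j0 where j0: "j0 < n" "c j0 \<noteq> 0" unfolding n_def by blast
  define den where "den = (\<lambda>j. snd (quotient_of (c j)))"
  define num where "num = (\<lambda>j. fst (quotient_of (c j)))"
  have denpos: "den j > 0" for j unfolding den_def by (rule quotient_of_denom_pos')
  have cj: "c j = of_int (num j) / of_int (den j)" for j
    unfolding num_def den_def by (rule quotient_of_div) simp
  define D where "D = (\<Prod>j<n. den j)"
  define d where "d = (\<lambda>j. num j * (\<Prod>i\<in>{..<n} - {j}. den i))"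
  have Dpos: "D > 0" unfolding D_def using denpos by (simp add: prod_pos)
  have dD: "(of_int (d j) :: rat) = of_int D * c j" if "j < n" for j
  proof -
    have "D = den j * (\<Prod>i\<in>{..<n} - {j}. den i)"
      unfolding D_def using that by (simp add: prod.remove)
    then show ?thesis unfolding d_def cj using denpos[of j]
      by (simp add: field_simps)
  qed
  have dDr: "(of_int (d j) :: real) = of_int D * of_rat (c j)" if "j < n" for j
  proof -
    have "(of_rat (of_int (d j)) :: real) = of_rat (of_int D * c j)" using dD[OF that] by simp
    then show ?thesis by (simp add: of_rat_mult)
  qed
  define b where "b = (\<Sum>j<n. monom (d j) j)"
  have cb: "coeff b k = (if k < n then d k else 0)" for k
    unfolding b_def by (simp add: coeff_sum coeff_monom)
  have bnz: "b \<noteq> 0"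
  proof
    assume "b = 0"
    then have "d j0 = 0" using cb[of j0] j0 by simp
    then have "(of_int D :: rat) * c j0 = 0" using dD[OF j0(1)] by simp
    then show False using Dpos j0 by simp
  qed
  have degb: "degree b \<le> n - 1"
    by (rule degree_le) (use cb j0 in auto)
  have mb: "map_poly (real_of_int) b = (\<Sum>j<n. monom (of_int (d j)) j)"
    by (intro poly_eqI) (simp add: coeff_map_poly cb coeff_sum coeff_monom)
  have "poly (map_poly real_of_int b) lam = (\<Sum>j<n. of_int (d j) * lam ^ j)"
    unfolding mb by (simp add: poly_sum poly_monom)
  also have "\<dots> = (\<Sum>j<n. of_int D * (of_rat (c j) * lam ^ j))"
    by (rule sum.cong) (simp_all add: dDr)
  also have "\<dots> = of_int D * (\<Sum>j<n. of_rat (c j) * lam ^ j)"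
    by (simp add: sum_distrib_left)
  also have "\<dots> = 0" using s0 unfolding n_def by simp
  finally have "degree p \<le> degree b" using minpoly_deg[OF irr pr bnz] by blast
  then show False using degb j0 unfolding n_def by simp
qed



lemma psi_exists:
  fixes v :: "'a::euclidean_space" and lam :: real
  assumes pis: "pisot lam" and irrat: "lam \<notin> \<rat>" and vnz: "v \<noteq> 0"
  shows "\<exists>(\<psi> :: 'a \<Rightarrow> complex) z. cmod z < 1 \<and> (\<forall>x y. \<psi> (x + y) = \<psi> x + \<psi> y)
           \<and> (\<forall>x. \<psi> (lam *\<^sub>R x) = z * \<psi> x) \<and> \<psi> v \<noteq> 0"
proof -
  have lam1: "lam > 1" using pis unfolding pisot_def by simp
  obtain p z where lc: "lead_coeff p = 1" and irr: "irreducible p"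
    and pr: "poly (map_poly real_of_int p) lam = 0" and deg2: "degree p \<ge> 2"
    and zr: "poly (map_poly complex_of_int p) z = 0" and zl: "cmod z < 1"
    using conj_root[OF pis irrat] by blast
  define n where "n = degree p"
  interpret V: vector_space_pair "\<lambda>r::rat. \<lambda>x::'a. of_rat r *\<^sub>R x" "\<lambda>r::rat. \<lambda>x::real. of_rat r * x"
    by unfold_locales (simp_all add: scaleR_add_right scaleR_add_left of_rat_add of_rat_mult algebra_simps)
  define f where "f = (\<lambda>j::nat. lam ^ j *\<^sub>R v)"
  have finj: "inj f"
  proof
    fix i j assume "f i = f j"
    then have "lam ^ i = lam ^ j" unfolding f_def using vnz by (simp add: scaleR_cancel_right)
    then show "i = j" using lam1 by (simp add: power_inject_exp)
  qed
  define B where "B = f ` {..<n}"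
  have finB: "finite B" unfolding B_def by simp
  have indep: "V.vs1.independent B"
    unfolding V.vs1.dependent_finite[OF finB]
  proof (intro notI, elim exE conjE bexE)
    fix c w assume cs: "(\<Sum>v\<in>B. of_rat (c v) *\<^sub>R v) = 0" and w: "w \<in> B" and cw: "c w \<noteq> 0"
    have "(\<Sum>v\<in>B. of_rat (c v) *\<^sub>R v) = (\<Sum>j<n. of_rat (c (f j)) *\<^sub>R f j)"
      unfolding B_def by (subst sum.reindex) (use finj in \<open>auto intro: inj_on_subset\<close>)
    also have "\<dots> = (\<Sum>j<n. of_rat (c (f j)) * lam ^ j) *\<^sub>R v"
      unfolding f_def by (simp add: scaleR_sum_left)
    finally have "(\<Sum>j<n. of_rat (c (f j)) * lam ^ j) = 0" using cs vnz by simp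
    then have "\<forall>j<n. c (f j) = 0"
      using rat_indep[OF irr pr, of "\<lambda>j. c (f j)"] unfolding n_def by blast
    then show False using w cw unfolding B_def by auto
  qed
  define g where "g = (\<lambda>w. if w = f (n - 1) then (1::real) else 0)"
  define h where "h = V.construct B g"
  have lin: "Vector_Spaces.linear (\<lambda>r::rat. \<lambda>x::'a. of_rat r *\<^sub>R x) (\<lambda>r::rat. \<lambda>x::real. of_rat r * x) h"
    unfolding h_def by (rule V.linear_construct[OF indep])
  have hadd: "h (x + y) = h x + h y" for x y using V.linear_add[OF lin] .
  have hsum: "h (\<Sum>i\<in>S. u i) = (\<Sum>i\<in>S. h (u i))" for S and u :: "nat \<Rightarrow> 'a"
    using V.linear_sum[OF lin] .
  have hint: "h (of_int k *\<^sub>R x) = of_int k * h x" for k x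
    using V.linear_scale[OF lin, of "of_int k" x] by simp
  have hB: "h (f j) = (if j = n - 1 then 1 else 0)" if "j < n" for j
  proof -
    have "h (f j) = g (f j)" unfolding h_def
      by (rule V.construct_basis[OF indep]) (use that B_def in auto)
    then show ?thesis unfolding g_def using finj by (auto dest: injD)
  qed
  define Pc where "Pc = map_poly complex_of_int p"
  obtain q where q: "Pc = [:- z, 1:] * q"
    using zr poly_eq_0_iff_dvd unfolding Pc_def by (metis dvdE)
  have dPc: "degree Pc = n" unfolding Pc_def n_def by (simp add: degree_map_poly)
  have qnz: "q \<noteq> 0" using q dPc deg2 n_def by auto
  have "degree Pc = degree [:- z, 1:] + degree q"
    unfolding q by (rule degree_mult_eq) (use qnz in auto)
  then have dq: "degree q = n - 1" using dPc by simp
  have lPc: "lead_coeff Pc = 1" unfolding Pc_def using lc by (simp add: degree_map_poly coeff_map_poly)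
  have "lead_coeff Pc = lead_coeff [:- z, 1:] * lead_coeff q" unfolding q by (rule lead_coeff_mult)
  then have lq: "coeff q (n - 1) = 1" using lPc dq by simp
  have pc_eq: "pCons 0 q = Pc + smult z q" unfolding q by (simp add: algebra_simps)
  define N where "N = n + 2"
  define \<psi> where "\<psi> = (\<lambda>u. \<Sum>j<N. coeff q j * complex_of_real (h (lam ^ j *\<^sub>R u)))"
  have psi_add: "\<psi> (x + y) = \<psi> x + \<psi> y" for x y
    unfolding \<psi>_def by (simp add: scaleR_add_right hadd sum.distrib algebra_simps)
  have psi_lam: "\<psi> (lam *\<^sub>R u) = z * \<psi> u" for u
  proof -
    define H where "H = (\<lambda>j. complex_of_real (h (lam ^ j *\<^sub>R u)))"
    have "\<psi> (lam *\<^sub>R u) = (\<Sum>j<N. coeff q j * H (Suc j))"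
      unfolding \<psi>_def H_def by (simp add: scaleR_scaleR mult.commute)
    also have "\<dots> = (\<Sum>j<n+1. coeff q j * H (Suc j))"
      unfolding N_def using coeff_eq_0[of q "n+1"] dq by simp
    also have "\<dots> = (\<Sum>j<N. coeff (pCons 0 q) j * H j)"
    proof -
      have NS: "N = Suc (n+1)" unfolding N_def by simp
      show ?thesis by (subst NS, subst sum.lessThan_Suc_shift) simp
    qed
    also have "\<dots> = (\<Sum>j<N. coeff Pc j * H j) + z * \<psi> u"
      unfolding pc_eq \<psi>_def H_def by (simp add: sum.distrib sum_distrib_left algebra_simps)
    also have "(\<Sum>j<N. coeff Pc j * H j) = 0"
    proof -
      have "(\<Sum>j<N. coeff Pc j * H j) = complex_of_real (\<Sum>j<N. of_int (coeff p j) * h (lam ^ j *\<^sub>R u))"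
        unfolding Pc_def H_def by (simp add: coeff_map_poly)
      also have "(\<Sum>j<N. of_int (coeff p j) * h (lam ^ j *\<^sub>R u)) = h (\<Sum>j<N. of_int (coeff p j) *\<^sub>R lam ^ j *\<^sub>R u)"
        by (simp only: hsum hint)
      also have "(\<Sum>j<N. of_int (coeff p j) *\<^sub>R lam ^ j *\<^sub>R u) = (\<Sum>j<N. of_int (coeff p j) * lam ^ j) *\<^sub>R u"
        by (simp add: scaleR_sum_left)
      also have "(\<Sum>j<N. of_int (coeff p j) * lam ^ j) = poly (map_poly real_of_int p) lam"
      proof -
        have "poly (map_poly real_of_int p) lam = (\<Sum>j\<le>n. of_int (coeff p j) * lam ^ j)"
          by (simp add: poly_altdef degree_map_poly coeff_map_poly n_def)
        also have "\<dots> = (\<Sum>j<N. of_int (coeff p j) * lam ^ j)"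
          by (rule sum.mono_neutral_left) (auto simp: N_def n_def coeff_eq_0)
        finally show ?thesis by simp
      qed
      also have "\<dots> = 0" by (rule pr)
      finally show ?thesis using V.linear_0[OF lin] by simp
    qed
    finally show ?thesis by simp
  qed
  have "\<psi> v = (\<Sum>j<N. coeff q j * complex_of_real (h (f j)))"
    unfolding \<psi>_def f_def by simp
  also have "\<dots> = (\<Sum>j<N. if j = n - 1 then 1 else 0)"
  proof (rule sum.cong)
    fix j assume "j \<in> {..<N}"
    show "coeff q j * complex_of_real (h (f j)) = (if j = n - 1 then 1 else 0)"
    proof (cases "j < n")
      case True then show ?thesis using hB lq by auto
    next
      case False then show ?thesis using dq coeff_eq_0[of q j] deg2 n_def by auto
    qed
  qed simp
  also have "\<dots> = 1" by (subst sum.delta) (auto simp: N_def)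
  finally have "\<psi> v \<noteq> 0" by simp
  then show ?thesis using zl psi_add psi_lam by blast
qed



lemma fst_ttrans [simp]: "fst (ttrans X a) = (\<lambda>y. y + a) ` fst X"
  by (simp add: ttrans_def)
lemma snd_ttrans [simp]: "snd (ttrans X a) = snd X"
  by (simp add: ttrans_def)

lemma ttrans_ttrans: "ttrans (ttrans X a) b = ttrans X (a + b)"
  unfolding ttrans_def by (simp add: image_image add.assoc)

lemma ttrans_0: "ttrans X 0 = X"
  unfolding ttrans_def by simp

lemma ttrans_eq: "ttrans X a = ttrans Y b \<Longrightarrow> X = ttrans Y (b - a)"
proof -
  assume "ttrans X a = ttrans Y b"
  then have "ttrans (ttrans X a) (-a) = ttrans (ttrans Y b) (-a)" by simp
  then show ?thesis by (simp add: ttrans_ttrans ttrans_0)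
qed

lemma trans_unique:
  fixes X :: "('a::euclidean_space, 'l) tile"
  assumes "compact (fst X)" "fst X \<noteq> {}" "ttrans X a = ttrans X b"
  shows "a = b"
proof -
  define u where "u = b - a"
  have XX: "X = ttrans X u" using ttrans_eq[OF assms(3)] unfolding u_def .
  obtain y0 where y0: "y0 \<in> fst X" and mx: "\<And>y. y \<in> fst X \<Longrightarrow> inner y u \<le> inner y0 u"
  proof -
    have "continuous_on (fst X) (\<lambda>y. inner y u)" by (intro continuous_intros)
    then show ?thesis using continuous_attains_sup[OF assms(1) assms(2), of "\<lambda>y. inner y u"] that by blast
  qed
  have "y0 + u \<in> fst (ttrans X u)" using y0 by simp
  then have "y0 + u \<in> fst X" using XX by simp
  then have "inner (y0 + u) u \<le> inner y0 u" by (rule mx)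
  then have "inner u u \<le> 0" by (simp add: inner_add_left)
  then have "u = 0" using inner_ge_zero[of u] inner_eq_zero_iff[of u] by linarith
  then show ?thesis unfolding u_def by simp
qed

lemma subsingleton_finite: "(\<And>x y. x \<in> S \<Longrightarrow> y \<in> S \<Longrightarrow> x = y) \<Longrightarrow> finite S"
proof (cases "S = {}")
  case False
  assume h: "\<And>x y. x \<in> S \<Longrightarrow> y \<in> S \<Longrightarrow> x = y"
  then obtain x where "x \<in> S" using False by blast
  then have "S = {x}" using h by blast
  then show ?thesis by simp
qed simp

definition Cset :: "('a::euclidean_space, 'l) tile set \<Rightarrow> 'a set" where
  "Cset A = {c. \<exists>P\<in>A. \<exists>P2\<in>A. P = ttrans P2 c}"

definition Dset :: "('a::euclidean_space, 'l) tile set \<Rightarrow> (('a, 'l) tile \<Rightarrow> ('a, 'l) tile set) \<Rightarrow> 'a set" where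
  "Dset A \<omega> = {d. \<exists>P1\<in>A. \<exists>R\<in>\<omega> P1. \<exists>P2\<in>A. R = ttrans P2 d}"

lemma finite_Cset:
  assumes "finite A" "\<forall>P\<in>A. compact (fst P) \<and> fst P \<noteq> {}"
  shows "finite (Cset A)"
proof -
  have "Cset A = (\<Union>P\<in>A. \<Union>P2\<in>A. {c. P = ttrans P2 c})" unfolding Cset_def by blast
  moreover have "finite {c. P = ttrans P2 c}" if "P2 \<in> A" for P P2
  proof (rule subsingleton_finite)
    fix x y assume "x \<in> {c. P = ttrans P2 c}" "y \<in> {c. P = ttrans P2 c}"
    then have e: "ttrans P2 x = ttrans P2 y" by simp
    show "x = y" by (rule trans_unique[OF _ _ e]) (use assms(2) that in auto)
  qed
  ultimately show ?thesis using assms(1) by simp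
qed

lemma finite_Dset:
  assumes "finite A" "\<forall>P\<in>A. compact (fst P) \<and> fst P \<noteq> {}" "\<forall>P\<in>A. finite (\<omega> P)"
  shows "finite (Dset A \<omega>)"
proof -
  have "Dset A \<omega> = (\<Union>P1\<in>A. \<Union>R\<in>\<omega> P1. \<Union>P2\<in>A. {d. R = ttrans P2 d})" unfolding Dset_def by blast
  moreover have "finite {d. R = ttrans P2 d}" if "P2 \<in> A" for R P2
  proof (rule subsingleton_finite)
    fix x y assume "x \<in> {d. R = ttrans P2 d}" "y \<in> {d. R = ttrans P2 d}"
    then have e: "ttrans P2 x = ttrans P2 y" by simp
    show "x = y" by (rule trans_unique[OF _ _ e]) (use assms(2) that in auto)
  qed
  ultimately show ?thesis using assms(1,3) by simp
qed

lemma decomp: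
  assumes sr: "subst_rule A lam \<omega>" and fx: "subst_patch A lam \<omega> \<T> = \<T>"
    and PA: "P \<in> A" and Ps: "ttrans P s \<in> \<T>"
  shows "\<exists>P1 x1 d c. P1 \<in> A \<and> ttrans P1 x1 \<in> \<T> \<and> d \<in> Dset A \<omega> \<and> c \<in> Cset A \<and>
     s = lam *\<^sub>R x1 + d - c \<and> fst (ttrans P s) \<subseteq> (\<lambda>y. lam *\<^sub>R y) ` fst (ttrans P1 x1)"
proof -
  have "ttrans P s \<in> subst_patch A lam \<omega> \<T>" using fx Ps by simp
  then obtain S where S: "S \<in> \<T>" "ttrans P s \<in> subst_tile A lam \<omega> S"
    unfolding subst_patch_def by blast
  then obtain P1 x1 where P1: "P1 \<in> A" "S = ttrans P1 x1" "ttrans P s \<in> ptrans (\<omega> P1) (lam *\<^sub>R x1)"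
    unfolding subst_tile_def by blast
  then obtain R where R: "R \<in> \<omega> P1" "ttrans P s = ttrans R (lam *\<^sub>R x1)"
    unfolding ptrans_def by blast
  have "\<omega> P1 \<subseteq> translates_of A" using sr P1(1) unfolding subst_rule_def by blast
  then obtain P2 d where P2: "P2 \<in> A" "R = ttrans P2 d" using R(1) unfolding translates_of_def by blast
  have "ttrans P s = ttrans P2 (d + lam *\<^sub>R x1)" using R(2) P2(2) by (simp add: ttrans_ttrans)
  then have Pc: "P = ttrans P2 (d + lam *\<^sub>R x1 - s)" by (rule ttrans_eq)
  define c where "c = d + lam *\<^sub>R x1 - s"
  have cC: "c \<in> Cset A" unfolding Cset_def c_def using PA P2(1) Pc by blast
  have dD: "d \<in> Dset A \<omega>" unfolding Dset_def using P1(1) R(1) P2 by blast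
  have suppw: "supp (\<omega> P1) = (\<lambda>y. lam *\<^sub>R y) ` fst P1" using sr P1(1) unfolding subst_rule_def by blast
  have Rsub: "fst R \<subseteq> supp (\<omega> P1)"
  proof -
    have "fst R \<subseteq> (\<Union>T\<in>\<omega> P1. fst T)" using R(1) by blast
    also have "\<dots> \<subseteq> supp (\<omega> P1)" unfolding supp_def by (rule closure_subset)
    finally show ?thesis .
  qed
  have geo: "fst (ttrans P s) \<subseteq> (\<lambda>y. lam *\<^sub>R y) ` fst (ttrans P1 x1)"
  proof
    fix w assume "w \<in> fst (ttrans P s)"
    then obtain r where r: "r \<in> fst R" "w = r + lam *\<^sub>R x1" using R(2) by auto
    then obtain b where b: "b \<in> fst P1" "r = lam *\<^sub>R b" using Rsub suppw by auto
    have "w = lam *\<^sub>R (b + x1)" using r b by (simp add: scaleR_add_right)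
    moreover have "b + x1 \<in> fst (ttrans P1 x1)" using b by simp
    ultimately show "w \<in> (\<lambda>y. lam *\<^sub>R y) ` fst (ttrans P1 x1)" by blast
  qed
  have "s = lam *\<^sub>R x1 + d - c" unfolding c_def by simp
  then show ?thesis using P1 S(1) dD cC geo by blast
qed



lemma infinite_UNIV_euclidean: "infinite (UNIV :: 'a::euclidean_space set)"
proof
  assume fin: "finite (UNIV :: 'a set)"
  obtain b :: 'a where b: "b \<in> Basis" using nonempty_Basis by blast
  then have bnz: "b \<noteq> 0" by auto
  have "inj (\<lambda>r::real. r *\<^sub>R b)" using bnz by (auto intro: injI simp: scaleR_cancel_right)
  moreover have "finite (range (\<lambda>r::real. r *\<^sub>R b))" using fin by (rule finite_subset[rotated]) simp
  ultimately have "finite (UNIV :: real set)" using finite_imageD by blast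
  then show False using infinite_UNIV_char_0 by blast
qed

lemma proto_nonempty:
  fixes A :: "('a::euclidean_space, 'l) tile set"
  assumes prim: "primitive A \<omega>" and PA: "P \<in> A"
  shows "fst P \<noteq> {}"
proof
  assume e: "fst P = {}"
  obtain n where n: "n \<ge> 1" "\<forall>Ti\<in>A. \<forall>Tj\<in>A. mat_pow A (subst_matrix \<omega>) n Ti Tj > 0"
    using prim unfolding primitive_def by blast
  obtain m where m: "n = Suc m" using n(1) by (cases n) auto
  have tP: "ttrans P x = P" for x using e by (cases P) (simp add: ttrans_def)
  have z: "subst_matrix \<omega> P k = 0" for k
  proof (cases "P \<in> \<omega> k")
    case True
    then have "{x. ttrans P x \<in> \<omega> k} = UNIV" using tP by simp
    then show ?thesis unfolding subst_matrix_def using infinite_UNIV_euclidean card.infinite by metis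
  next
    case False
    then have "{x. ttrans P x \<in> \<omega> k} = {}" using tP by simp
    then show ?thesis unfolding subst_matrix_def by simp
  qed
  have "mat_pow A (subst_matrix \<omega>) n P P = 0" unfolding m by (simp add: z)
  then show False using n(2) PA by fastforce
qed

lemma finite_positions:
  fixes P :: "('a::euclidean_space, 'l) tile"
  assumes patch: "is_patch \<T>" and tile: "is_tile P" and ne: "fst P \<noteq> {}"
  shows "finite {s. ttrans P s \<in> \<T> \<and> norm s \<le> R0}"
proof -
  have cpt: "compact (fst P)" and ci: "fst P = closure (interior (fst P))"
    using tile unfolding is_tile_def by auto
  have "interior (fst P) \<noteq> {}" using ne ci by auto
  then obtain a where a: "a \<in> interior (fst P)" by blast
  then obtain \<rho> where rho: "\<rho> > 0" "ball a \<rho> \<subseteq> interior (fst P)"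
    using open_contains_ball open_interior by blast
  have intr: "interior (fst (ttrans P s)) = (\<lambda>y. y + s) ` interior (fst P)" for s
  proof -
    have eq: "(\<lambda>y. y + s) = (+) s" by (rule ext) (simp add: add.commute)
    show ?thesis unfolding fst_ttrans eq by (rule interior_translation)
  qed
  have ballin: "ball (a + s) \<rho> \<subseteq> interior (fst (ttrans P s))" for s
  proof
    fix w assume "w \<in> ball (a + s) \<rho>"
    then have "w - s \<in> ball a \<rho>" by (simp add: dist_norm algebra_simps)
    then have "w - s \<in> interior (fst P)" using rho by blast
    then have "(w - s) + s \<in> (\<lambda>y. y + s) ` interior (fst P)" by blast
    then show "w \<in> interior (fst (ttrans P s))" using intr by simp
  qed
  define S where "S = {s. ttrans P s \<in> \<T> \<and> norm s \<le> R0}"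
  have sep: "dist s s' \<ge> \<rho>" if "s \<in> S" "s' \<in> S" "s \<noteq> s'" for s s'
  proof (rule ccontr)
    assume "\<not> \<rho> \<le> dist s s'"
    then have d: "dist (a + s) (a + s') < \<rho>" by (simp add: dist_norm)
    have "ttrans P s \<noteq> ttrans P s'" using trans_unique[OF cpt ne] that(3) by blast
    then have disj: "interior (fst (ttrans P s)) \<inter> interior (fst (ttrans P s')) = {}"
      using patch that(1,2) unfolding is_patch_def S_def by blast
    have "a + s \<in> interior (fst (ttrans P s))" using ballin[of s] rho(1) by auto
    moreover have "a + s \<in> interior (fst (ttrans P s'))" using ballin[of s'] d by (auto simp: dist_commute)
    ultimately show False using disj by blast
  qed
  show ?thesis
  proof (rule ccontr)
    assume inf: "\<not> finite {s. ttrans P s \<in> \<T> \<and> norm s \<le> R0}"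
    have "bounded S" unfolding S_def bounded_iff by blast
    then obtain x where "x islimpt S" using bounded_infinite_imp_islimpt[of S S] inf S_def by blast
    then obtain y1 where y1: "y1 \<in> S" "y1 \<noteq> x" "dist y1 x < \<rho> / 2"
      unfolding islimpt_approachable using rho(1) by (meson half_gt_zero)
    then have "dist y1 x > 0" by simp
    then obtain y2 where y2: "y2 \<in> S" "y2 \<noteq> x" "dist y2 x < dist y1 x"
      using \<open>x islimpt S\<close> unfolding islimpt_approachable by blast
    have "y1 \<noteq> y2" using y2(3) by auto
    then have "dist y1 y2 \<ge> \<rho>" using sep y1(1) y2(1) by blast
    moreover have "dist y1 y2 \<le> dist y1 x + dist y2 x" by (metis dist_commute dist_triangle)
    ultimately show False using y1(3) y2(3) by linarith
  qed
qed



lemma psi_bound: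
  fixes A :: "('a::euclidean_space, 'l) tile set" and \<psi> :: "'a \<Rightarrow> complex"
  assumes sr: "subst_rule A lam \<omega>" and fx: "subst_patch A lam \<omega> \<T> = \<T>"
    and til: "is_tiling \<T>" and ne: "\<forall>P\<in>A. fst P \<noteq> {}" and lam1: "lam > 1"
    and padd: "\<And>x y. \<psi> (x + y) = \<psi> x + \<psi> y"
    and plam: "\<And>x. \<psi> (lam *\<^sub>R x) = z * \<psi> x" and zl: "cmod z < 1"
  shows "\<exists>B. \<forall>P\<in>A. \<forall>s. ttrans P s \<in> \<T> \<longrightarrow> cmod (\<psi> s) \<le> B"
proof -
  have finA: "finite A" and tiles: "\<forall>P\<in>A. is_tile P" and finw: "\<forall>P\<in>A. finite (\<omega> P)"
    using sr unfolding subst_rule_def by auto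
  have cpt: "\<forall>P\<in>A. compact (fst P) \<and> fst P \<noteq> {}" using tiles ne unfolding is_tile_def by auto
  have patch: "is_patch \<T>" using til unfolding is_tiling_def by simp
  have psub: "\<psi> (x - y) = \<psi> x - \<psi> y" for x y
    using padd[of "x - y" y] by simp
  have "bounded (\<Union>P\<in>A. fst P)" using finA cpt by (auto intro!: bounded_UN compact_imp_bounded)
  then obtain r0 where r0: "\<forall>x\<in>(\<Union>P\<in>A. fst P). norm x \<le> r0" unfolding bounded_iff by blast
  define r where "r = max r0 0"
  have r: "r \<ge> 0" "\<And>P y. P \<in> A \<Longrightarrow> y \<in> fst P \<Longrightarrow> norm y \<le> r" using r0 unfolding r_def by force+
  define R0 where "R0 = (r + lam * r + lam) / (lam - 1)"
  have R0pos: "R0 \<ge> 0" unfolding R0_def using r lam1 by simp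
  define S0 where "S0 = (\<Union>P\<in>A. {s. ttrans P s \<in> \<T> \<and> norm s \<le> R0})"
  have finS0: "finite S0" unfolding S0_def using finA
  proof (intro finite_UN_I)
    fix P assume "P \<in> A"
    then show "finite {s. ttrans P s \<in> \<T> \<and> norm s \<le> R0}"
      using finite_positions[OF patch] tiles ne by blast
  qed
  define B0 where "B0 = (\<Sum>s\<in>S0. cmod (\<psi> s))"
  define M where "M = (\<Sum>d\<in>Dset A \<omega>. cmod (\<psi> d)) + (\<Sum>c\<in>Cset A. cmod (\<psi> c))"
  have finD: "finite (Dset A \<omega>)" by (rule finite_Dset[OF finA cpt finw])
  have finC: "finite (Cset A)" by (rule finite_Cset[OF finA cpt])
  have Mpos: "M \<ge> 0" unfolding M_def by (simp add: sum_nonneg)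
  have B0pos: "B0 \<ge> 0" unfolding B0_def by (simp add: sum_nonneg)
  define B where "B = B0 + M / (1 - cmod z)"
  have zl': "1 - cmod z > 0" using zl by simp
  have BB0: "B0 \<le> B" unfolding B_def using Mpos zl' by simp
  have Bstep: "cmod z * B + M \<le> B"
  proof -
    have "cmod z * B + M = cmod z * B0 + M / (1 - cmod z)" unfolding B_def
      using zl' by (simp add: field_simps)
    also have "\<dots> \<le> B" unfolding B_def using B0pos zl by (simp add: mult_left_le_one_le)
    finally show ?thesis .
  qed
  have base: "cmod (\<psi> s) \<le> B" if "P \<in> A" "ttrans P s \<in> \<T>" "norm s \<le> R0" for P s
  proof -
    have "s \<in> S0" unfolding S0_def using that by blast
    then have "cmod (\<psi> s) \<le> B0" unfolding B0_def by (intro member_le_sum) (use finS0 in auto)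
    then show ?thesis using BB0 by simp
  qed
  have main: "\<forall>P s. P \<in> A \<longrightarrow> ttrans P s \<in> \<T> \<longrightarrow> norm s \<le> real k \<longrightarrow> cmod (\<psi> s) \<le> B" for k
  proof (induction k)
    case 0
    then show ?case using base R0pos by force
  next
    case (Suc k)
    show ?case
    proof (intro allI impI)
      fix P s assume PA: "P \<in> A" and Ps: "ttrans P s \<in> \<T>" and ns: "norm s \<le> real (Suc k)"
      show "cmod (\<psi> s) \<le> B"
      proof (cases "norm s \<le> R0")
        case True then show ?thesis using base PA Ps by blast
      next
        case False
        obtain P1 x1 d c where dc: "P1 \<in> A" "ttrans P1 x1 \<in> \<T>" "d \<in> Dset A \<omega>" "c \<in> Cset A"
          "s = lam *\<^sub>R x1 + d - c" "fst (ttrans P s) \<subseteq> (\<lambda>y. lam *\<^sub>R y) ` fst (ttrans P1 x1)"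
          using decomp[OF sr fx PA Ps] by blast
        obtain a where a: "a \<in> fst P" using ne PA by blast
        have "a + s \<in> fst (ttrans P s)" using a by simp
        then obtain w where w: "w \<in> fst (ttrans P1 x1)" "a + s = lam *\<^sub>R w" using dc(6) by blast
        then obtain b where b: "b \<in> fst P1" "w = b + x1" by auto
        have x1eq: "x1 = (1 / lam) *\<^sub>R (a + s) - b" using w(2) b(2) lam1 by (simp add: algebra_simps)
        have "norm x1 \<le> (1 / lam) * norm (a + s) + norm b" unfolding x1eq
          using norm_triangle_ineq4[of "(1 / lam) *\<^sub>R (a + s)" b] lam1 by simp
        also have "\<dots> \<le> (1 / lam) * (r + norm s) + r"
        proof -
          have "norm (a + s) \<le> r + norm s" using norm_triangle_ineq[of a s] r(2)[OF PA a] by simp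
          moreover have "norm b \<le> r" using r(2)[OF dc(1) b(1)] .
          moreover have "norm (a + s) / lam \<le> (r + norm s) / lam"
            using calculation(1) lam1 by (simp add: divide_right_mono)
          ultimately show ?thesis by simp
        qed
        also have "\<dots> \<le> norm s - 1"
        proof -
          have "R0 < norm s" using False by simp
          then have "r + lam * r + lam < (lam - 1) * norm s" unfolding R0_def using lam1
            by (simp add: pos_divide_less_eq mult.commute)
          then have "r + norm s + lam * r \<le> lam * (norm s - 1)" by (simp add: algebra_simps)
          then show ?thesis using lam1 by (simp add: field_simps)
        qed
        finally have "norm x1 \<le> real k" using ns by simp
        then have IH: "cmod (\<psi> x1) \<le> B" using Suc.IH dc(1,2) by blast
        have "\<psi> s = z * \<psi> x1 + \<psi> d - \<psi> c" unfolding dc(5) by (simp add: psub padd plam)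
        then have "cmod (\<psi> s) \<le> cmod z * cmod (\<psi> x1) + cmod (\<psi> d) + cmod (\<psi> c)"
        proof -
          assume e: "\<psi> s = z * \<psi> x1 + \<psi> d - \<psi> c"
          have "cmod (z * \<psi> x1 + \<psi> d - \<psi> c) \<le> cmod (z * \<psi> x1 + \<psi> d) + cmod (\<psi> c)"
            by (rule norm_triangle_ineq4)
          moreover have "cmod (z * \<psi> x1 + \<psi> d) \<le> cmod (z * \<psi> x1) + cmod (\<psi> d)"
            by (rule norm_triangle_ineq)
          moreover have "cmod (z * \<psi> x1) = cmod z * cmod (\<psi> x1)" by (rule norm_mult)
          ultimately show ?thesis unfolding e by linarith
        qed
        also have "\<dots> \<le> cmod z * B + M"
        proof -
          have "cmod (\<psi> d) \<le> (\<Sum>d\<in>Dset A \<omega>. cmod (\<psi> d))" by (intro member_le_sum) (use finD dc(3) in auto)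
          moreover have "cmod (\<psi> c) \<le> (\<Sum>c\<in>Cset A. cmod (\<psi> c))" by (intro member_le_sum) (use finC dc(4) in auto)
          moreover have "cmod z * cmod (\<psi> x1) \<le> cmod z * B" using IH by (simp add: mult_left_mono)
          ultimately show ?thesis unfolding M_def by simp
        qed
        also have "\<dots> \<le> B" by (rule Bstep)
        finally show ?thesis .
      qed
    qed
  qed
  have "\<forall>P\<in>A. \<forall>s. ttrans P s \<in> \<T> \<longrightarrow> cmod (\<psi> s) \<le> B"
  proof (intro ballI allI impI)
    fix P s assume "P \<in> A" "ttrans P s \<in> \<T>"
    moreover have "norm s \<le> real (nat \<lceil>norm s\<rceil>)" by linarith
    ultimately show "cmod (\<psi> s) \<le> B" using main by blast
  qed
  then show ?thesis by blast
qed



theorem theorem3p1: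
  fixes A :: "('a::euclidean_space, 'l::finite) tile set"
    and lam :: real
    and \<omega> :: "('a, 'l) tile \<Rightarrow> ('a, 'l) tile set"
    and \<T> :: "('a, 'l) tile set"
  assumes "subst_rule A lam \<omega>"
    and "primitive A \<omega>"
    and "FLC A lam \<omega>"
    and "pisot lam"
    and "lam \<notin> \<rat>"
    and "is_tiling \<T>"
    and "\<T> \<subseteq> translates_of A"
    and "subst_patch A lam \<omega> \<T> = \<T>"
    and "repetitive \<T>"
  shows "\<forall>\<P> v. finite \<P> \<and> \<P> \<noteq> {} \<and> legal \<T> \<P> \<and> v \<noteq> 0 \<longrightarrow>
           (\<exists>n0::nat. \<not> legal \<T> (\<Union>n\<in>{0..n0}. ptrans \<P> (real n *\<^sub>R v)))"
proof (intro allI impI, elim conjE)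
  fix \<P> :: "('a, 'l) tile set" and v :: 'a
  assume Pne: "\<P> \<noteq> {}" and vnz: "v \<noteq> 0"
  have sr: "subst_rule A lam \<omega>" and TA: "\<T> \<subseteq> translates_of A" by fact+
  have lam1: "lam > 1" using assms(4) unfolding pisot_def by simp
  have ne: "\<forall>P\<in>A. fst P \<noteq> {}" using proto_nonempty[OF assms(2)] by blast
  obtain \<psi> :: "'a \<Rightarrow> complex" and z where zl: "cmod z < 1"
    and padd: "\<And>x y. \<psi> (x + y) = \<psi> x + \<psi> y" and plam: "\<And>x. \<psi> (lam *\<^sub>R x) = z * \<psi> x"
    and pv: "\<psi> v \<noteq> 0"
    using psi_exists[OF assms(4) assms(5) vnz] by blast
  obtain B where B: "\<forall>P\<in>A. \<forall>s. ttrans P s \<in> \<T> \<longrightarrow> cmod (\<psi> s) \<le> B"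
    using psi_bound[OF sr assms(8) assms(6) ne lam1 padd plam zl] by blast
  have psin: "\<psi> (real n *\<^sub>R v) = of_nat n * \<psi> v" for n
  proof (induction n)
    case 0
    have "\<psi> 0 = 0" using padd[of 0 0] by simp
    then show ?case by simp
  next
    case (Suc n)
    have "real (Suc n) *\<^sub>R v = v + real n *\<^sub>R v" by (simp add: algebra_simps)
    then show ?case using Suc padd by (simp add: algebra_simps)
  qed
  obtain T0 where T0: "T0 \<in> \<P>" using Pne by blast
  have "cmod (\<psi> v) > 0" using pv by simp
  obtain n0 :: nat where n0: "2 * B / cmod (\<psi> v) < real n0" using reals_Archimedean2 by blast
  show "\<exists>n0::nat. \<not> legal \<T> (\<Union>n\<in>{0..n0}. ptrans \<P> (real n *\<^sub>R v))"
  proof (intro exI notI)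
    assume "legal \<T> (\<Union>n\<in>{0..n0}. ptrans \<P> (real n *\<^sub>R v))"
    then obtain x where x: "ptrans (\<Union>n\<in>{0..n0}. ptrans \<P> (real n *\<^sub>R v)) x \<subseteq> \<T>"
      unfolding legal_def by blast
    have inT: "ttrans T0 (real n *\<^sub>R v + x) \<in> \<T>" if "n \<le> n0" for n
    proof -
      have "ttrans T0 (real n *\<^sub>R v) \<in> (\<Union>n\<in>{0..n0}. ptrans \<P> (real n *\<^sub>R v))"
        using that T0 unfolding ptrans_def by auto
      then have "ttrans (ttrans T0 (real n *\<^sub>R v)) x \<in> \<T>" using x unfolding ptrans_def by blast
      then show ?thesis by (simp add: ttrans_ttrans)
    qed
    have "ttrans T0 x \<in> \<T>" using inT[of 0] by simp
    then obtain P t where Pt: "P \<in> A" "ttrans T0 x = ttrans P t"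
      using TA unfolding translates_of_def by blast
    have e: "ttrans T0 (real n *\<^sub>R v + x) = ttrans P (t + real n *\<^sub>R v)" for n
    proof -
      have "ttrans T0 (real n *\<^sub>R v + x) = ttrans (ttrans T0 x) (real n *\<^sub>R v)"
        by (simp add: ttrans_ttrans add.commute)
      then show ?thesis using Pt(2) by (simp add: ttrans_ttrans)
    qed
    have "ttrans P t \<in> \<T>" using \<open>ttrans T0 x \<in> \<T>\<close> Pt(2) by simp
    then have b0: "cmod (\<psi> t) \<le> B" using B Pt(1) by blast
    have "ttrans P (t + real n0 *\<^sub>R v) \<in> \<T>" using inT[of n0] e[of n0] by simp
    then have b1: "cmod (\<psi> (t + real n0 *\<^sub>R v)) \<le> B" using B Pt(1) by blast
    have "\<psi> (t + real n0 *\<^sub>R v) = \<psi> t + of_nat n0 * \<psi> v" using padd psin by simp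
    then have "of_nat n0 * \<psi> v = \<psi> (t + real n0 *\<^sub>R v) - \<psi> t" by simp
    then have "real n0 * cmod (\<psi> v) \<le> cmod (\<psi> (t + real n0 *\<^sub>R v)) + cmod (\<psi> t)"
      by (metis norm_mult norm_of_nat norm_triangle_ineq4)
    also have "\<dots> \<le> 2 * B" using b0 b1 by simp
    finally have "real n0 \<le> 2 * B / cmod (\<psi> v)"
      using \<open>cmod (\<psi> v) > 0\<close> by (simp add: pos_le_divide_eq)
    then show False using n0 by simp
  qed
qed

end
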